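(* Let $T,S\in\mathcal{B}_A(\mathcal{H})$ be $A$-selfadjoint (i.e. $AT$ and $AS$ are selfadjoint). Then $$\omega_A(T+S)\le\sqrt{\omega_A^2(T+iS)+\omega_A(ST)+\|T\|_A\|S\|_A}\le\omega_A(T)+\omega_A(S).$$
   Context: $\mathcal{H}$ is a complex Hilbert space with inner product $\langle\cdot,\cdot\rangle$, and $A$ is a fixed nonzero positive bounded operator on $\mathcal{H}$. Set $\langle x,y\rangle_A=\langle Ax,y\rangle$ and $\|x\|_A=\|A^{1/2}x\|$. $\mathcal{B}_A(\mathcal{H})$ is the set of bounded operators $T$ for which there exists a bounded $S$ with $\langle Tx,y\rangle_A=\langle x,Sy\rangle_A$ for all $x,y$. For an operator $T$ with $\|Tx\|_A\le\lambda\|x\|_A$ for some $\lambda>0$ and all $x$, $\|T\|_A=\sup\{\|Tx\|_A: \|x\|_A=1\}$, and $\omega_A(T)=\sup\{|\langle Tx,x\rangle_A|:\|x\|_A=1\}$. *)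

theory Defs
  imports "HOL-Analysis.Analysis"
begin

text \<open>Complex Hilbert spaces are not available in the distribution, so we introduce
  them as a type class: a complex vector space with a complex inner product
  (linear in the first argument, conjugate-linear in the second), complete with
  respect to the induced norm.\<close>

class chilbert = ab_group_add +
  fixes scaleC :: "complex \<Rightarrow> 'a \<Rightarrow> 'a" (infixr \<open>*\<^sub>C\<close> 75)
    and cinner :: "'a \<Rightarrow> 'a \<Rightarrow> complex"
  assumes scaleC_add_right: "a *\<^sub>C (x + y) = a *\<^sub>C x + a *\<^sub>C y"
    and scaleC_add_left: "(a + b) *\<^sub>C x = a *\<^sub>C x + b *\<^sub>C x"
    and scaleC_scaleC: "a *\<^sub>C (b *\<^sub>C x) = (a * b) *\<^sub>C x"
    and scaleC_one: "1 *\<^sub>C x = x"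
    and cinner_conj: "cinner x y = cnj (cinner y x)"
    and cinner_add_left: "cinner (x + y) z = cinner x z + cinner y z"
    and cinner_scaleC_left: "cinner (a *\<^sub>C x) y = a * cinner x y"
    and cinner_self_real: "Im (cinner x x) = 0"
    and cinner_self_nonneg: "0 \<le> Re (cinner x x)"
    and cinner_self_eq_zero: "cinner x x = 0 \<Longrightarrow> x = 0"
    and hilbert_complete:
      "(\<forall>e>0. \<exists>N. \<forall>m\<ge>N. \<forall>n\<ge>N. sqrt (Re (cinner (X m - X n) (X m - X n))) < e)
        \<Longrightarrow> \<exists>L. (\<lambda>n. sqrt (Re (cinner (X n - L) (X n - L)))) \<longlonglongrightarrow> 0"

definition hnorm :: "'a::chilbert \<Rightarrow> real" where
  "hnorm x = sqrt (Re (cinner x x))"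

definition bounded_op :: "('a::chilbert \<Rightarrow> 'a) \<Rightarrow> bool" where
  "bounded_op T \<longleftrightarrow> (\<forall>x y. T (x + y) = T x + T y) \<and> (\<forall>c x. T (c *\<^sub>C x) = c *\<^sub>C T x)
     \<and> (\<exists>K. \<forall>x. hnorm (T x) \<le> K * hnorm x)"

definition positive_op :: "('a::chilbert \<Rightarrow> 'a) \<Rightarrow> bool" where
  "positive_op A \<longleftrightarrow> bounded_op A \<and> (\<forall>x. Im (cinner (A x) x) = 0 \<and> 0 \<le> Re (cinner (A x) x))"

text \<open>Semi-inner product \<open>\<langle>x,y\<rangle>_A = \<langle>Ax,y\<rangle>\<close> and seminorm
  \<open>\<parallel>x\<parallel>_A = \<parallel>A^{1/2}x\<parallel> = sqrt \<langle>Ax,x\<rangle>\<close>.\<close>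
definition cinnerA :: "('a::chilbert \<Rightarrow> 'a) \<Rightarrow> 'a \<Rightarrow> 'a \<Rightarrow> complex" where
  "cinnerA A x y = cinner (A x) y"

definition normA :: "('a::chilbert \<Rightarrow> 'a) \<Rightarrow> 'a \<Rightarrow> real" where
  "normA A x = sqrt (Re (cinnerA A x x))"

definition BA :: "('a::chilbert \<Rightarrow> 'a) \<Rightarrow> ('a \<Rightarrow> 'a) set" where
  "BA A = {T. bounded_op T \<and>
     (\<exists>S. bounded_op S \<and> (\<forall>x y. cinnerA A (T x) y = cinnerA A x (S y)))}"

definition A_selfadjoint :: "('a::chilbert \<Rightarrow> 'a) \<Rightarrow> ('a \<Rightarrow> 'a) \<Rightarrow> bool" where
  "A_selfadjoint A T \<longleftrightarrow> (\<forall>x y. cinner (A (T x)) y = cinner x (A (T y)))"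

definition opnormA :: "('a::chilbert \<Rightarrow> 'a) \<Rightarrow> ('a \<Rightarrow> 'a) \<Rightarrow> real" where
  "opnormA A T = Sup {normA A (T x) | x. normA A x = 1}"

definition omegaA :: "('a::chilbert \<Rightarrow> 'a) \<Rightarrow> ('a \<Rightarrow> 'a) \<Rightarrow> real" where
  "omegaA A T = Sup {cmod (cinnerA A (T x) x) | x. normA A x = 1}"

end

theory Submission
  imports Defs
begin


lemma scaleC_zero_left[simp]: "(0::complex) *\<^sub>C (x::'a::chilbert) = 0"
proof -
  have "(0::complex) *\<^sub>C x = 0 *\<^sub>C x + 0 *\<^sub>C x" using scaleC_add_left[of 0 0 x] by simp
  then show ?thesis by simp
qed

lemma scaleC_zero_right[simp]: "c *\<^sub>C (0::'a::chilbert) = 0"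
proof -
  have "c *\<^sub>C (0::'a) = c *\<^sub>C 0 + c *\<^sub>C 0" using scaleC_add_right[of c 0 0] by simp
  then show ?thesis by simp
qed

lemma scaleC_minus_left: "(- c) *\<^sub>C (x::'a::chilbert) = - (c *\<^sub>C x)"
proof -
  have "(- c) *\<^sub>C x + c *\<^sub>C x = 0" using scaleC_add_left[of "-c" c x] by simp
  then show ?thesis by (simp add: eq_neg_iff_add_eq_0)
qed

lemma scaleC_minus_right: "c *\<^sub>C (- (x::'a::chilbert)) = - (c *\<^sub>C x)"
proof -
  have "c *\<^sub>C (- x) + c *\<^sub>C x = 0" using scaleC_add_right[of c "-x" x] by simp
  then show ?thesis by (simp add: eq_neg_iff_add_eq_0)
qed

lemma scaleC_diff_right: "c *\<^sub>C ((x::'a::chilbert) - y) = c *\<^sub>C x - c *\<^sub>C y"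
  using scaleC_add_right[of c x "-y"] by (simp add: scaleC_minus_right)

lemma cinner_zero_left[simp]: "cinner (0::'a::chilbert) y = 0"
  using cinner_scaleC_left[of 0 "0::'a" y] by simp

lemma cinner_zero_right[simp]: "cinner (x::'a::chilbert) 0 = 0"
  using cinner_conj[of x 0] by simp

lemma cinner_add_right: "cinner (x::'a::chilbert) (y + z) = cinner x y + cinner x z"
  by (metis cinner_conj cinner_add_left complex_cnj_add)

lemma cinner_scaleC_right: "cinner (x::'a::chilbert) (c *\<^sub>C y) = cnj c * cinner x y"
  by (metis cinner_conj cinner_scaleC_left complex_cnj_mult)

lemma cinner_minus_left: "cinner (- (x::'a::chilbert)) y = - cinner x y"
  using cinner_scaleC_left[of "-1" x y] scaleC_minus_left[of 1 x] by (simp add: scaleC_one)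

lemma cinner_minus_right: "cinner (x::'a::chilbert) (- y) = - cinner x y"
  by (metis cinner_conj cinner_minus_left complex_cnj_minus)

lemma cinner_diff_left: "cinner ((x::'a::chilbert) - y) z = cinner x z - cinner y z"
  using cinner_add_left[of x "-y" z] by (simp add: cinner_minus_left)

lemma cinner_diff_right: "cinner (x::'a::chilbert) (y - z) = cinner x y - cinner x z"
  using cinner_add_right[of x y "-z"] by (simp add: cinner_minus_right)

lemma bop_add: "bounded_op T \<Longrightarrow> T (x + y) = T x + T y"
  unfolding bounded_op_def by blast
lemma bop_scale: "bounded_op T \<Longrightarrow> T (c *\<^sub>C x) = c *\<^sub>C T x"
  unfolding bounded_op_def by blast
lemma bop_zero: "bounded_op T \<Longrightarrow> T 0 = 0"
  using bop_scale[of T 0 0] by simp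
lemma bop_minus: "bounded_op T \<Longrightarrow> T (- x) = - T x"
  using bop_add[of T x "-x"] bop_zero[of T] by (simp add: eq_neg_iff_add_eq_0 add.commute)
lemma bop_diff: "bounded_op T \<Longrightarrow> T (x - y) = T x - T y"
  using bop_add[of T x "-y"] bop_minus[of T y] by simp

context
  fixes A :: "'a::chilbert \<Rightarrow> 'a"
  assumes posA: "positive_op A"
begin

lemma bopA: "bounded_op A" using posA unfolding positive_op_def by blast

lemma BA_add_left: "cinnerA A (x + y) z = cinnerA A x z + cinnerA A y z"
  unfolding cinnerA_def using bop_add[OF bopA] cinner_add_left by simp
lemma BA_scale_left: "cinnerA A (c *\<^sub>C x) z = c * cinnerA A x z"
  unfolding cinnerA_def using bop_scale[OF bopA] cinner_scaleC_left by simp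
lemma BA_add_right: "cinnerA A x (y + z) = cinnerA A x y + cinnerA A x z"
  unfolding cinnerA_def by (rule cinner_add_right)
lemma BA_scale_right: "cinnerA A x (c *\<^sub>C y) = cnj c * cinnerA A x y"
  unfolding cinnerA_def by (rule cinner_scaleC_right)
lemma BA_minus_left: "cinnerA A (- x) z = - cinnerA A x z"
  unfolding cinnerA_def using bop_minus[OF bopA] cinner_minus_left by simp
lemma BA_minus_right: "cinnerA A x (- z) = - cinnerA A x z"
  unfolding cinnerA_def by (rule cinner_minus_right)
lemma BA_diff_left: "cinnerA A (x - y) z = cinnerA A x z - cinnerA A y z"
  unfolding cinnerA_def using bop_diff[OF bopA] cinner_diff_left by simp
lemma BA_diff_right: "cinnerA A x (y - z) = cinnerA A x y - cinnerA A x z"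
  unfolding cinnerA_def by (rule cinner_diff_right)
lemma BA_self_Im: "Im (cinnerA A x x) = 0"
  using posA unfolding positive_op_def cinnerA_def by blast
lemma BA_self_Re: "0 \<le> Re (cinnerA A x x)"
  using posA unfolding positive_op_def cinnerA_def by blast
lemma BA_self_real: "cinnerA A x x = complex_of_real (Re (cinnerA A x x))"
  using BA_self_Im by (simp add: complex_eq_iff)

lemma BA_herm: "cinnerA A y x = cnj (cinnerA A x y)"
proof -
  have e1: "cinnerA A (x + y) (x + y) = cinnerA A x x + cinnerA A x y + cinnerA A y x + cinnerA A y y"
    by (simp add: BA_add_left BA_add_right)
  have e2: "cinnerA A (x + \<i> *\<^sub>C y) (x + \<i> *\<^sub>C y) = cinnerA A x x - \<i> * cinnerA A x y + \<i> * cinnerA A y x + cinnerA A y y"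
    by (simp add: BA_add_left BA_add_right BA_scale_left BA_scale_right algebra_simps)
  have i1: "Im (cinnerA A x y + cinnerA A y x) = 0"
    using e1 BA_self_Im[of "x+y"] BA_self_Im[of x] BA_self_Im[of y] by simp
  have i2: "Re (cinnerA A y x) - Re (cinnerA A x y) = 0"
    using e2 BA_self_Im[of "x + \<i> *\<^sub>C y"] BA_self_Im[of x] BA_self_Im[of y] by simp
  show ?thesis using i1 i2 by (simp add: complex_eq_iff)
qed

end


context
  fixes A :: "'a::chilbert \<Rightarrow> 'a"
  assumes posA: "positive_op A"
begin

abbreviation "B \<equiv> cinnerA A"

lemma CS_sq: "(cmod (B x y))^2 \<le> Re (B x x) * Re (B y y)"
proof -
  define a where "a = Re (B x x)"
  define b where "b = Re (B y y)"
  define p where "p = (cmod (B x y))^2"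
  have a0: "a \<ge> 0" "b \<ge> 0" "p \<ge> 0" using BA_self_Re[OF posA] unfolding a_def b_def p_def by auto
  have Bxx: "B x x = of_real a" unfolding a_def using BA_self_real[OF posA] by blast
  have Byy: "B y y = of_real b" unfolding b_def using BA_self_real[OF posA] by blast
  have Byx: "B y x = cnj (B x y)" using BA_herm[OF posA] by blast
  have pp: "B x y * cnj (B x y) = of_real p" unfolding p_def by (rule complex_norm_square[symmetric])
  have key: "0 \<le> a - 2 * t * p + t^2 * p * b" for t :: real
  proof -
    define c where "c = of_real t * B x y"
    have "B (x - c *\<^sub>C y) (x - c *\<^sub>C y) = B x x - cnj c * B x y - c * B y x + c * cnj c * B y y"
      by (simp add: BA_diff_left[OF posA] BA_diff_right[OF posA] BA_scale_left[OF posA] BA_scale_right[OF posA] algebra_simps)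
    also have "\<dots> = of_real a - of_real t * (B x y * cnj (B x y)) - of_real t * (B x y * cnj (B x y))
        + of_real t * of_real t * (B x y * cnj (B x y)) * of_real b"
      unfolding c_def Bxx Byy Byx by (simp add: algebra_simps)
    also have "\<dots> = of_real (a - 2 * t * p + t^2 * p * b)" unfolding pp by (simp add: algebra_simps power2_eq_square)
    finally show ?thesis using BA_self_Re[OF posA, of "x - c *\<^sub>C y"] by simp
  qed
  have "p \<le> a * b"
  proof (cases "b = 0")
    case True
    show ?thesis
    proof (rule ccontr)
      assume "\<not> p \<le> a * b"
      then have "p > 0" using True by simp
      have "0 \<le> a - 2*((a+1)/(2*p))*p" using key[of "(a+1)/(2*p)"] True by simp
      also have "\<dots> = -1" using \<open>p>0\<close> by (simp add: field_simps)
      finally show False by simp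
    qed
  next
    case False
    then have "b > 0" using a0 by simp
    have "0 \<le> a - 2*(1/b)*p + (1/b)^2*p*b" using key[of "1/b"] .
    also have "\<dots> = (a*b - p)/b" using \<open>b>0\<close> by (simp add: field_simps power2_eq_square)
    finally show ?thesis using \<open>b>0\<close> by (simp add: divide_nonneg_pos zero_le_divide_iff)
  qed
  then show ?thesis unfolding a_def b_def p_def .
qed


lemma normA_sq: "(normA A x)^2 = Re (B x x)"
  unfolding normA_def by (simp add: BA_self_Re[OF posA])

lemma normA_nonneg: "normA A x \<ge> 0" unfolding normA_def by (simp add: BA_self_Re[OF posA])

lemma B_self: "B x x = of_real ((normA A x)^2)"
  using normA_sq BA_self_real[OF posA] by metis

lemma CS: "cmod (B x y) \<le> normA A x * normA A y"
proof -
  have "(cmod (B x y))^2 \<le> (normA A x * normA A y)^2"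
    using CS_sq by (simp add: power_mult_distrib normA_sq)
  then show ?thesis using normA_nonneg by (simp add: power2_le_iff_abs_le)
qed

lemma normA_scale: "normA A (c *\<^sub>C x) = cmod c * normA A x"
proof -
  have "B (c *\<^sub>C x) (c *\<^sub>C x) = (c * cnj c) * B x x"
    by (simp add: BA_scale_left[OF posA] BA_scale_right[OF posA] algebra_simps)
  then have "(normA A (c *\<^sub>C x))^2 = (cmod c)^2 * (normA A x)^2"
    by (simp add: normA_sq complex_norm_square[symmetric])
  then have "(normA A (c *\<^sub>C x))^2 = (cmod c * normA A x)^2" by (simp add: power_mult_distrib)
  then show ?thesis using normA_nonneg by (simp add: power2_eq_iff_nonneg)
qed

lemma buzano:
  assumes e: "normA A e = 1"
  shows "2 * cmod (B u e * B e v) \<le> cmod (B u v) + normA A u * normA A v"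
proof -
  define w where "w = B v e"
  define P where "P = (2 * w) *\<^sub>C e - v"
  have Bee: "B e e = 1" using B_self[of e] e by simp
  have Bev: "B e v = cnj w" unfolding w_def using BA_herm[OF posA] by blast
  have "B u P = 2 * cnj w * B u e - B u v"
    unfolding P_def by (simp add: BA_diff_right[OF posA] BA_scale_right[OF posA])
  then have eq: "2 * (B u e * B e v) = B u v + B u P" unfolding Bev by (simp add: algebra_simps)
  have "B P P = 4 * (w * cnj w) * B e e - 2 * w * B e v - 2 * cnj w * B v e + B v v"
    unfolding P_def by (simp add: BA_diff_left[OF posA] BA_diff_right[OF posA] BA_scale_left[OF posA] BA_scale_right[OF posA] algebra_simps)
  also have "\<dots> = B v v" unfolding Bee Bev w_def[symmetric] by (simp add: algebra_simps)
  finally have "(normA A P)^2 = (normA A v)^2" by (simp add: normA_sq)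
  then have nP: "normA A P = normA A v" using normA_nonneg by (simp add: power2_eq_iff_nonneg)
  have "2 * cmod (B u e * B e v) = cmod (B u v + B u P)"
    using arg_cong[OF eq, of cmod] by (simp add: norm_mult)
  also have "\<dots> \<le> cmod (B u v) + cmod (B u P)" by (rule norm_triangle_ineq)
  also have "\<dots> \<le> cmod (B u v) + normA A u * normA A v" using CS[of u P] nP by simp
  finally show ?thesis .
qed

lemma parallelogram: "Re (B (x + y) (x + y)) + Re (B (x - y) (x - y)) = 2 * Re (B x x) + 2 * Re (B y y)"
  by (simp add: BA_add_left[OF posA] BA_add_right[OF posA] BA_diff_left[OF posA] BA_diff_right[OF posA])

end


lemma hnorm_nonneg: "hnorm x \<ge> 0" unfolding hnorm_def by (simp add: cinner_self_nonneg)

lemma pos_id: "positive_op (\<lambda>x::'a::chilbert. x)"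
  unfolding positive_op_def bounded_op_def
  by (auto simp: cinner_self_real cinner_self_nonneg intro: exI[of _ 1])

lemma CS_h: "cmod (cinner x y) \<le> hnorm x * hnorm (y::'a::chilbert)"
  using CS[OF pos_id, of x y] unfolding normA_def hnorm_def cinnerA_def by simp

lemma pow_bound:
  fixes T :: "'a::chilbert \<Rightarrow> 'a"
  assumes "\<forall>x. hnorm (T x) \<le> K * hnorm x" "K \<ge> 0"
  shows "hnorm ((T^^m) x) \<le> K^m * hnorm x"
proof (induction m)
  case 0 then show ?case by simp
next
  case (Suc m)
  have "hnorm ((T^^Suc m) x) = hnorm (T ((T^^m) x))" by simp
  also have "\<dots> \<le> K * hnorm ((T^^m) x)" using assms(1) by blast
  also have "\<dots> \<le> K * (K^m * hnorm x)" using Suc assms(2) by (simp add: mult_left_mono)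
  finally show ?case by simp
qed

context
  fixes A :: "'a::chilbert \<Rightarrow> 'a"
  assumes posA: "positive_op A"
begin

lemma sa_B: assumes "A_selfadjoint A T" shows "cinnerA A (T x) y = cinnerA A x (T y)"
proof -
  have "cinnerA A x (T y) = cnj (cinnerA A (T y) x)" using BA_herm[OF posA] by blast
  also have "\<dots> = cnj (cinner (A (T y)) x)" unfolding cinnerA_def ..
  also have "\<dots> = cinner x (A (T y))" by (metis cinner_conj)
  also have "\<dots> = cinner (A (T x)) y" using assms unfolding A_selfadjoint_def by simp
  finally show ?thesis unfolding cinnerA_def by simp
qed

lemma sa_pow: assumes "A_selfadjoint A T" shows "cinnerA A ((T^^m) x) y = cinnerA A x ((T^^m) y)"
proof (induction m arbitrary: x y)
  case 0 then show ?case by simp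
next
  case (Suc m)
  have "cinnerA A ((T^^Suc m) x) y = cinnerA A (T ((T^^m) x)) y" by simp
  also have "\<dots> = cinnerA A ((T^^m) x) (T y)" using sa_B[OF assms] by blast
  also have "\<dots> = cinnerA A x ((T^^m) (T y))" using Suc by blast
  also have "\<dots> = cinnerA A x ((T^^Suc m) y)" by (simp add: funpow_swap1)
  finally show ?case .
qed

lemma sq_step: assumes "A_selfadjoint A T"
  shows "(normA A ((T^^m) x))^2 \<le> normA A ((T^^(2*m)) x) * normA A x"
proof -
  have "(normA A ((T^^m) x))^2 = Re (cinnerA A ((T^^m) x) ((T^^m) x))" by (rule normA_sq[OF posA])
  also have "\<dots> = Re (cinnerA A ((T^^m) ((T^^m) x)) x)" using sa_pow[OF assms] by metis
  also have "(T^^m) ((T^^m) x) = (T^^(2*m)) x" by (simp add: mult_2 funpow_add)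
  also have "Re (cinnerA A ((T^^(2*m)) x) x) \<le> cmod (cinnerA A ((T^^(2*m)) x) x)" by (rule complex_Re_le_cmod)
  also have "\<dots> \<le> normA A ((T^^(2*m)) x) * normA A x" by (rule CS[OF posA])
  finally show ?thesis .
qed

lemma iter_step: assumes "A_selfadjoint A T" "normA A x = 1"
  shows "(normA A (T x))^(2^n) \<le> normA A ((T^^(2^n)) x)"
proof (induction n)
  case 0 then show ?case by simp
next
  case (Suc n)
  have "(normA A (T x))^(2^Suc n) = ((normA A (T x))^(2^n))^2" by (simp add: power_mult[symmetric] mult.commute)
  also have "\<dots> \<le> (normA A ((T^^(2^n)) x))^2"
    using Suc by (simp add: power_mono normA_nonneg[OF posA])
  also have "\<dots> \<le> normA A ((T^^(2*2^n)) x) * normA A x" by (rule sq_step[OF assms(1)])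
  finally show ?case using assms(2) by simp
qed

lemma normA_le_h: assumes "\<forall>x. hnorm (A x) \<le> KA * hnorm x" "KA \<ge> 0"
  shows "normA A y \<le> sqrt KA * hnorm y"
proof -
  have "(normA A y)^2 \<le> cmod (cinner (A y) y)"
    using complex_Re_le_cmod normA_sq[OF posA] unfolding cinnerA_def by metis
  also have "\<dots> \<le> hnorm (A y) * hnorm y" by (rule CS_h)
  also have "\<dots> \<le> KA * hnorm y * hnorm y" using mult_right_mono[OF spec[OF assms(1), of y] hnorm_nonneg[of y]] by simp
  also have "\<dots> = (sqrt KA * hnorm y)^2" using assms(2) by (simp add: power_mult_distrib power2_eq_square)
  finally have "(normA A y)^2 \<le> (sqrt KA * hnorm y)^2" .
  then show ?thesis by (rule power2_le_imp_le) (simp add: hnorm_nonneg assms(2))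
qed

lemma A_bounded: assumes "A_selfadjoint A T" "bounded_op T"
  shows "\<exists>K. \<forall>x. normA A x = 1 \<longrightarrow> normA A (T x) \<le> K"
proof -
  obtain K where K: "\<forall>x. hnorm (T x) \<le> K * hnorm x" using assms(2) unfolding bounded_op_def by blast
  obtain KA where KA: "\<forall>x. hnorm (A x) \<le> KA * hnorm x" using bopA[OF posA] unfolding bounded_op_def by blast
  define K1 where "K1 = max K 1"
  define KA1 where "KA1 = max KA 0"
  have K1: "\<forall>x. hnorm (T x) \<le> K1 * hnorm x" "K1 \<ge> 1" unfolding K1_def
    using K hnorm_nonneg by (metis order.trans mult_right_mono max.cobounded1, simp)
  have KA1: "\<forall>x. hnorm (A x) \<le> KA1 * hnorm x" "KA1 \<ge> 0" unfolding KA1_def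
    using KA hnorm_nonneg by (metis order.trans mult_right_mono max.cobounded1, simp)
  have "normA A (T x) \<le> K1" if x: "normA A x = 1" for x
  proof (rule ccontr)
    assume "\<not> normA A (T x) \<le> K1"
    then have gt: "normA A (T x) > K1" by simp
    define C where "C = sqrt KA1 * hnorm x"
    define r where "r = normA A (T x) / K1"
    have r1: "r > 1" unfolding r_def using gt K1(2) by simp
    have bnd: "r^(2^n) \<le> C" for n
    proof -
      have "(normA A (T x))^(2^n) \<le> normA A ((T^^(2^n)) x)" by (rule iter_step[OF assms(1) x])
      also have "\<dots> \<le> sqrt KA1 * hnorm ((T^^(2^n)) x)" by (rule normA_le_h[OF KA1])
      also have "\<dots> \<le> sqrt KA1 * (K1^(2^n) * hnorm x)"
        using pow_bound[of T K1, OF K1(1)] K1(2) KA1(2) by (intro mult_left_mono) simp_all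
      finally have "(normA A (T x))^(2^n) \<le> C * K1^(2^n)" unfolding C_def by (simp add: algebra_simps)
      moreover have "K1^(2^n) > 0" using K1(2) by simp
      ultimately show ?thesis unfolding r_def by (simp add: power_divide pos_divide_le_eq)
    qed
    obtain n where n: "C < r^n" using real_arch_pow[OF r1] by blast
    have "r^n \<le> r^(2^n)" using r1 by (intro power_increasing) (simp_all add: less_imp_le[OF less_exp])
    then show False using n bnd[of n] by simp
  qed
  then show ?thesis by blast
qed

end


lemma sup_le:
  assumes "\<exists>x. normA A x = 1" "\<And>x. normA A x = 1 \<Longrightarrow> f x \<le> (M::real)"
  shows "Sup {f x | x. normA A x = 1} \<le> M"
  using assms by (intro cSup_least) auto

lemma le_sup:
  assumes "\<And>x. normA A x = 1 \<Longrightarrow> f x \<le> (M::real)" "normA A x = 1"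
  shows "f x \<le> Sup {f x | x. normA A x = 1}"
proof (rule cSup_upper)
  show "f x \<in> {f x | x. normA A x = 1}" using assms(2) by blast
  show "bdd_above {f x | x. normA A x = 1}" using assms(1) by (auto intro!: bdd_aboveI[of _ M])
qed

context
  fixes A :: "'a::chilbert \<Rightarrow> 'a"
  assumes posA: "positive_op A"
begin

lemma exists_unit: assumes "A \<noteq> (\<lambda>x. 0)" shows "\<exists>x. normA A x = 1"
proof -
  obtain x0 where x0: "A x0 \<noteq> 0" using assms by blast
  have "normA A x0 \<noteq> 0"
  proof
    assume h: "normA A x0 = 0"
    have "cmod (cinnerA A x0 (A x0)) \<le> normA A x0 * normA A (A x0)" by (rule CS[OF posA])
    then have "cinner (A x0) (A x0) = 0" using h unfolding cinnerA_def by simp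
    then show False using x0 cinner_self_eq_zero by blast
  qed
  then have n: "normA A x0 > 0" using normA_nonneg[OF posA, of x0] by simp
  have "normA A (complex_of_real (1 / normA A x0) *\<^sub>C x0) = 1"
    using n by (simp add: norm_divide normA_scale[OF posA])
  then show ?thesis by blast
qed

lemma B_real: assumes "A_selfadjoint A T" shows "cinnerA A (T x) x = of_real (Re (cinnerA A (T x) x))"
proof -
  have "cinnerA A (T x) x = cinnerA A x (T x)" by (rule sa_B[OF posA assms])
  also have "\<dots> = cnj (cinnerA A (T x) x)" using BA_herm[OF posA] by blast
  finally show ?thesis by (metis Reals_cnj_iff complex_is_Real_iff of_real_Re)
qed

lemma omega_all:
  assumes bT: "bounded_op T" and w: "\<And>x. normA A x = 1 \<Longrightarrow> cmod (cinnerA A (T x) x) \<le> w"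
  shows "cmod (cinnerA A (T z) z) \<le> w * (normA A z)^2"
proof (cases "normA A z = 0")
  case True
  have "cmod (cinnerA A (T z) z) \<le> normA A (T z) * normA A z" by (rule CS[OF posA])
  then show ?thesis using True by simp
next
  case False
  then have n: "normA A z > 0" using normA_nonneg[OF posA, of z] by simp
  define c where "c = complex_of_real (1 / normA A z)"
  have u: "normA A (c *\<^sub>C z) = 1" unfolding c_def using n by (simp add: norm_divide normA_scale[OF posA])
  have "cinnerA A (T (c *\<^sub>C z)) (c *\<^sub>C z) = (c * cnj c) * cinnerA A (T z) z"
    by (simp add: bop_scale[OF bT] BA_scale_left[OF posA] BA_scale_right[OF posA] algebra_simps)
  then have "cmod (cinnerA A (T (c *\<^sub>C z)) (c *\<^sub>C z)) = cmod (cinnerA A (T z) z) / (normA A z)^2"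
    unfolding c_def using n by (simp add: norm_mult norm_divide power2_eq_square)
  then have "cmod (cinnerA A (T z) z) / (normA A z)^2 \<le> w" using w[OF u] by simp
  then show ?thesis using n by (simp add: pos_divide_le_eq)
qed

lemma opnorm_le_omega:
  assumes bT: "bounded_op T" and saT: "A_selfadjoint A T" and x: "normA A x = 1"
    and w: "\<And>x. normA A x = 1 \<Longrightarrow> cmod (cinnerA A (T x) x) \<le> w"
  shows "normA A (T x) \<le> w"
proof -
  have w0: "w \<ge> 0" using w[OF x] norm_ge_zero order.trans by blast
  show ?thesis
  proof (cases "normA A (T x) = 0")
    case True then show ?thesis using w0 by simp
  next
    case False
    define t where "t = normA A (T x)"
    have t: "t > 0" using False normA_nonneg[OF posA, of "T x"] unfolding t_def by simp
    define y where "y = complex_of_real (1 / t) *\<^sub>C T x"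
    have ny: "normA A y = 1" unfolding y_def using t by (simp add: norm_divide normA_scale[OF posA] t_def)
    have Bxy: "cinnerA A (T x) y = of_real t"
    proof -
      have "cinnerA A (T x) y = of_real (1/t) * cinnerA A (T x) (T x)"
        unfolding y_def by (simp add: BA_scale_right[OF posA])
      also have "\<dots> = of_real (1/t) * of_real (t^2)" using B_self[OF posA] t_def by metis
      finally show ?thesis using t by (simp add: power2_eq_square)
    qed
    have Byx: "cinnerA A (T y) x = of_real t"
    proof -
      have "cinnerA A (T y) x = cinnerA A y (T x)" by (rule sa_B[OF posA saT])
      also have "\<dots> = cnj (cinnerA A (T x) y)" using BA_herm[OF posA] by blast
      finally show ?thesis using Bxy by simp
    qed
    have diff: "cinnerA A (T (x + y)) (x + y) - cinnerA A (T (x - y)) (x - y)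
        = 2 * cinnerA A (T x) y + 2 * cinnerA A (T y) x"
      by (simp add: bop_add[OF bT] bop_diff[OF bT] BA_add_left[OF posA] BA_add_right[OF posA]
          BA_diff_left[OF posA] BA_diff_right[OF posA])
    have "4 * t = Re (cinnerA A (T (x + y)) (x + y) - cinnerA A (T (x - y)) (x - y))"
      unfolding diff Bxy Byx by simp
    also have "\<dots> \<le> cmod (cinnerA A (T (x + y)) (x + y)) + cmod (cinnerA A (T (x - y)) (x - y))"
      by (metis complex_Re_le_cmod minus_complex.sel(1) norm_triangle_ineq4 order.trans)
    also have "\<dots> \<le> w * (normA A (x + y))^2 + w * (normA A (x - y))^2"
      using omega_all[OF bT w] by (simp add: add_mono)
    also have "\<dots> = w * ((normA A (x + y))^2 + (normA A (x - y))^2)" by (simp add: algebra_simps)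
    also have "\<dots> = w * (2 * (normA A x)^2 + 2 * (normA A y)^2)"
      by (simp only: normA_sq[OF posA] parallelogram[OF posA])
    also have "\<dots> = 4 * w" using x ny by simp
    finally show ?thesis unfolding t_def by simp
  qed
qed

end


theorem theorem3p9:
  fixes A T S :: "'a::chilbert \<Rightarrow> 'a"
  assumes "positive_op A" and "A \<noteq> (\<lambda>x. 0)"
    and "T \<in> BA A" and "S \<in> BA A"
    and "A_selfadjoint A T" and "A_selfadjoint A S"
  shows "omegaA A (\<lambda>x. T x + S x)
           \<le> sqrt ((omegaA A (\<lambda>x. T x + \<i> *\<^sub>C S x))\<^sup>2 + omegaA A (\<lambda>x. S (T x))
                   + opnormA A T * opnormA A S)
       \<and> sqrt ((omegaA A (\<lambda>x. T x + \<i> *\<^sub>C S x))\<^sup>2 + omegaA A (\<lambda>x. S (T x))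
                   + opnormA A T * opnormA A S)
           \<le> omegaA A T + omegaA A S"
proof -
  note posA = assms(1)
  have bT: "bounded_op T" using assms(3) unfolding BA_def by blast
  have bS: "bounded_op S" using assms(4) unfolding BA_def by blast
  note saT = assms(5) and saS = assms(6)
  have ne: "\<exists>x. normA A x = 1" by (rule exists_unit[OF posA assms(2)])
  then obtain x0 where x0: "normA A x0 = 1" by blast
  obtain KT where KT: "\<And>x. normA A x = 1 \<Longrightarrow> normA A (T x) \<le> KT" using A_bounded[OF posA saT bT] by blast
  obtain KS where KS: "\<And>x. normA A x = 1 \<Longrightarrow> normA A (S x) \<le> KS" using A_bounded[OF posA saS bS] by blast
  define wT where "wT = omegaA A T"
  define wS where "wS = omegaA A S"
  define wTS where "wTS = omegaA A (\<lambda>x. T x + S x)"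
  define wTiS where "wTiS = omegaA A (\<lambda>x. T x + \<i> *\<^sub>C S x)"
  define wST where "wST = omegaA A (\<lambda>x. S (T x))"
  define nT where "nT = opnormA A T"
  define nS where "nS = opnormA A S"
  have cT: "\<And>x. normA A x = 1 \<Longrightarrow> cmod (cinnerA A (T x) x) \<le> KT"
  proof -
    fix x assume x: "normA A x = 1"
    have "cmod (cinnerA A (T x) x) \<le> normA A (T x) * normA A x" by (rule CS[OF posA])
    then show "cmod (cinnerA A (T x) x) \<le> KT" using KT[OF x] x by simp
  qed
  have cS: "\<And>x. normA A x = 1 \<Longrightarrow> cmod (cinnerA A (S x) x) \<le> KS"
  proof -
    fix x assume x: "normA A x = 1"
    have "cmod (cinnerA A (S x) x) \<le> normA A (S x) * normA A x" by (rule CS[OF posA])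
    then show "cmod (cinnerA A (S x) x) \<le> KS" using KS[OF x] x by simp
  qed
  have wT: "\<And>x. normA A x = 1 \<Longrightarrow> cmod (cinnerA A (T x) x) \<le> wT"
    unfolding wT_def omegaA_def by (rule le_sup[OF cT])
  have wS: "\<And>x. normA A x = 1 \<Longrightarrow> cmod (cinnerA A (S x) x) \<le> wS"
    unfolding wS_def omegaA_def by (rule le_sup[OF cS])
  have nT: "\<And>x. normA A x = 1 \<Longrightarrow> normA A (T x) \<le> nT"
    unfolding nT_def opnormA_def by (rule le_sup[OF KT])
  have nS: "\<And>x. normA A x = 1 \<Longrightarrow> normA A (S x) \<le> nS"
    unfolding nS_def opnormA_def by (rule le_sup[OF KS])
  have wT0: "wT \<ge> 0" using wT[OF x0] norm_ge_zero order.trans by blast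
  have wS0: "wS \<ge> 0" using wS[OF x0] norm_ge_zero order.trans by blast
  have nT0: "nT \<ge> 0" using nT[OF x0] normA_nonneg[OF posA] order.trans by blast
  have nS0: "nS \<ge> 0" using nS[OF x0] normA_nonneg[OF posA] order.trans by blast
  have nTw: "nT \<le> wT" unfolding nT_def opnormA_def
    by (rule sup_le[OF ne]) (rule opnorm_le_omega[OF posA bT saT _ wT])
  have nSw: "nS \<le> wS" unfolding nS_def opnormA_def
    by (rule sup_le[OF ne]) (rule opnorm_le_omega[OF posA bS saS _ wS])
  have STeq: "\<And>x. cinnerA A (S (T x)) x = cinnerA A (T x) (S x)"
    using sa_B[OF posA saS] by blast
  have cST: "\<And>x. normA A x = 1 \<Longrightarrow> cmod (cinnerA A (S (T x)) x) \<le> nT * nS"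
  proof -
    fix x assume x: "normA A x = 1"
    have "cmod (cinnerA A (S (T x)) x) \<le> normA A (T x) * normA A (S x)"
      unfolding STeq by (rule CS[OF posA])
    also have "\<dots> \<le> nT * nS" using nT[OF x] nS[OF x] nT0 normA_nonneg[OF posA] by (intro mult_mono) auto
    finally show "cmod (cinnerA A (S (T x)) x) \<le> nT * nS" .
  qed
  have wSTb: "\<And>x. normA A x = 1 \<Longrightarrow> cmod (cinnerA A (S (T x)) x) \<le> wST"
    unfolding wST_def omegaA_def by (rule le_sup[OF cST])
  have wSTle: "wST \<le> nT * nS" unfolding wST_def omegaA_def by (rule sup_le[OF ne cST])
  have ab: "cinnerA A (T x + \<i> *\<^sub>C S x) x = Complex (Re (cinnerA A (T x) x)) (Re (cinnerA A (S x) x))"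
    "cinnerA A (T x + S x) x = of_real (Re (cinnerA A (T x) x) + Re (cinnerA A (S x) x))" for x
  proof -
    have rT: "cinnerA A (T x) x = of_real (Re (cinnerA A (T x) x))" by (rule B_real[OF posA saT])
    have rS: "cinnerA A (S x) x = of_real (Re (cinnerA A (S x) x))" by (rule B_real[OF posA saS])
    show "cinnerA A (T x + \<i> *\<^sub>C S x) x = Complex (Re (cinnerA A (T x) x)) (Re (cinnerA A (S x) x))"
      by (subst BA_add_left[OF posA], subst BA_scale_left[OF posA], subst rT, subst rS)
         (simp add: complex_eq_iff)
    show "cinnerA A (T x + S x) x = of_real (Re (cinnerA A (T x) x) + Re (cinnerA A (S x) x))"
      by (subst BA_add_left[OF posA], subst rT, subst rS) simp
  qed
  have cTiS: "\<And>x. normA A x = 1 \<Longrightarrow> cmod (cinnerA A (T x + \<i> *\<^sub>C S x) x) \<le> sqrt (wT^2 + wS^2)"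
  proof -
    fix x assume x: "normA A x = 1"
    define a where "a = Re (cinnerA A (T x) x)"
    define b where "b = Re (cinnerA A (S x) x)"
    have "\<bar>a\<bar> \<le> wT" using wT[OF x] B_real[OF posA saT, of x] unfolding a_def by (metis norm_of_real)
    then have "a^2 \<le> wT^2" using power_mono[OF _ abs_ge_zero, of a wT 2] by simp
    moreover have "\<bar>b\<bar> \<le> wS" using wS[OF x] B_real[OF posA saS, of x] unfolding b_def by (metis norm_of_real)
    then have "b^2 \<le> wS^2" using power_mono[OF _ abs_ge_zero, of b wS 2] by simp
    ultimately show "cmod (cinnerA A (T x + \<i> *\<^sub>C S x) x) \<le> sqrt (wT^2 + wS^2)"
      unfolding ab(1) a_def[symmetric] b_def[symmetric] cmod_def by simp
  qed
  have wTiSb: "\<And>x. normA A x = 1 \<Longrightarrow> cmod (cinnerA A (T x + \<i> *\<^sub>C S x) x) \<le> wTiS"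
    unfolding wTiS_def omegaA_def by (rule le_sup[OF cTiS])
  have wTiS0: "wTiS \<ge> 0" using wTiSb[OF x0] norm_ge_zero order.trans by blast
  have wTiSle: "wTiS \<le> sqrt (wT^2 + wS^2)" unfolding wTiS_def omegaA_def by (rule sup_le[OF ne cTiS])
  define R where "R = wTiS^2 + wST + nT * nS"
  have part1: "wTS \<le> sqrt R" unfolding wTS_def omegaA_def
  proof (rule sup_le[OF ne])
    fix x assume x: "normA A x = 1"
    define a where "a = Re (cinnerA A (T x) x)"
    define b where "b = Re (cinnerA A (S x) x)"
    have rT: "cinnerA A (T x) x = of_real a" unfolding a_def by (rule B_real[OF posA saT])
    have rS: "cinnerA A (S x) x = of_real b" unfolding b_def by (rule B_real[OF posA saS])
    have xS0: "cinnerA A x (S x) = cnj (cinnerA A (S x) x)" using BA_herm[OF posA] by blast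
    have xS: "cinnerA A x (S x) = of_real b" unfolding xS0 rS by simp
    have "2 * cmod (cinnerA A (T x) x * cinnerA A x (S x)) \<le> cmod (cinnerA A (T x) (S x)) + normA A (T x) * normA A (S x)"
      by (rule buzano[OF posA x])
    also have "\<dots> \<le> wST + nT * nS"
      using wSTb[OF x] STeq[of x] nT[OF x] nS[OF x] nT0 normA_nonneg[OF posA]
      by (intro add_mono mult_mono) auto
    finally have ab2: "2 * \<bar>a * b\<bar> \<le> wST + nT * nS" unfolding rT xS by (simp add: abs_mult norm_mult)
    have "cmod (cinnerA A (T x + \<i> *\<^sub>C S x) x) = sqrt (a^2 + b^2)" unfolding ab(1) a_def b_def cmod_def by simp
    then have "a^2 + b^2 \<le> wTiS^2" using wTiSb[OF x] by (metis power2_le_imp_le real_le_rsqrt real_sqrt_le_iff power_mono real_sqrt_ge_zero real_sqrt_pow2_iff add_nonneg_nonneg zero_le_power2)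
    then have "(a + b)^2 \<le> R" unfolding R_def using ab2 by (simp add: power2_sum)
    then have "\<bar>a + b\<bar> \<le> sqrt R" by (simp add: real_le_rsqrt)
    then show "cmod (cinnerA A (T x + S x) x) \<le> sqrt R" unfolding ab(2) a_def b_def by (simp only: norm_of_real)
  qed
  have "R \<le> (wT + wS)^2"
  proof -
    have "wTiS^2 \<le> wT^2 + wS^2" using wTiSle wTiS0 by (metis power_mono real_sqrt_pow2 add_nonneg_nonneg zero_le_power2)
    moreover have "nT * nS \<le> wT * wS" using nTw nSw nT0 nS0 by (intro mult_mono) auto
    ultimately show ?thesis unfolding R_def using wSTle by (simp add: power2_sum)
  qed
  then have part2: "sqrt R \<le> wT + wS" using wT0 wS0 by (simp add: real_sqrt_le_iff real_le_lsqrt)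
  show ?thesis using part1 part2 unfolding R_def wTS_def wTiS_def wST_def nT_def nS_def wT_def wS_def by simp
qed


end
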